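(* Let $X=\{x_j:j\in J\}\subset\mathbb{R}^2$ be a finite set with $n=|J|$, and let $\mathcal{D}$ be any farthest point Delaunay triangulation of $X$. A point $s\in\mathbb{R}^2$ is the (quadratic) min-power centre of $X$ if and only if there is a face $D$ of $\mathcal{D}$ (a vertex, an edge, or a triangle) such that $s\in\mathrm{int}(T(D))$ and $s\in V_D$.
   Context: For $s\in\mathbb{R}^2$ let $P(s)=\sum_{i\in J}\|s-x_i\|^2+\max_{i\in J}\|s-x_i\|^2$ (Euclidean norm). The min-power centre $s^*$ of $X$ is the unique minimiser of $P$. Let $M=\frac1n\sum_{i\in J}x_i$ be the centroid, and let $T:\mathbb{R}^2\to\mathbb{R}^2$ be the homothety $T(y)=\frac{1}{n+1}(y+nM)$; thus $T(x_j)=M_j:=\frac{1}{n+1}\big(x_j+\sum_{i\in J}x_i\big)$. The farthest point Voronoi diagram of $X$ partitions the plane into regions $V(x_j)=\{s:\|s-x_j\|=\max_{i\in J}\|s-x_i\|\}$. A farthest point Delaunay triangulation of $X$ is a triangulation of (the extreme points of) $X$ such that the circumcircle of every triangle encloses all points of $X$; it is dual to the farthest point Voronoi diagram. For a face $D$ of $\mathcal{D}$ with vertex index set $J_D$, its dual face is $V_D=\bigcap_{j\in J_D}V(x_j)$. $\mathrm{int}(\cdot)$ denotes relative interior of a face, with the convention $\mathrm{int}(\{x\})=\{x\}$ for a single point. *)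

theory Defs
  imports "HOL-Analysis.Analysis"
begin

definition power_fn :: "(real^2) set \<Rightarrow> real^2 \<Rightarrow> real" where
  "power_fn X s = (\<Sum>x\<in>X. (norm (s - x))\<^sup>2) + Max ((\<lambda>x. (norm (s - x))\<^sup>2) ` X)"

definition min_power_centre :: "(real^2) set \<Rightarrow> real^2 \<Rightarrow> bool" where
  "min_power_centre X s \<longleftrightarrow> (\<forall>t. power_fn X s \<le> power_fn X t)"

text \<open>The homothety T(y) = (y + n M)/(n+1), where n M is the sum of the points.\<close>
definition homT :: "(real^2) set \<Rightarrow> real^2 \<Rightarrow> real^2" where
  "homT X y = (1 / (real (card X) + 1)) *\<^sub>R (y + (\<Sum>x\<in>X. x))"

definition far_voronoi :: "(real^2) set \<Rightarrow> real^2 \<Rightarrow> (real^2) set" where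
  "far_voronoi X v = {s. \<forall>x\<in>X. dist s x \<le> dist s v}"

text \<open>A farthest point Delaunay triangulation of X, given as the simplicial complex K
  of its faces (vertex sets of vertices, edges and triangles): faces are nonempty
  affinely independent sets of extreme points of X, closed under nonempty subsets,
  meeting properly; every extreme point is a vertex; the faces cover the convex hull
  of X; and the circumcircle of every triangle encloses all points of X.\<close>
definition fp_delaunay_triangulation :: "(real^2) set \<Rightarrow> (real^2) set set \<Rightarrow> bool" where
  "fp_delaunay_triangulation X K \<longleftrightarrow>
     (\<forall>F\<in>K. F \<noteq> {} \<and> F \<subseteq> {x. x extreme_point_of (convex hull X)} \<and>
              \<not> affine_dependent F \<and> (\<forall>G. G \<noteq> {} \<and> G \<subseteq> F \<longrightarrow> G \<in> K)) \<and>
     (\<forall>F\<in>K. \<forall>G\<in>K. convex hull F \<inter> convex hull G = convex hull (F \<inter> G)) \<and>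
     (\<forall>x. x extreme_point_of (convex hull X) \<longrightarrow> {x} \<in> K) \<and>
     \<Union>((\<lambda>F. convex hull F) ` K) = convex hull X \<and>
     (\<forall>F\<in>K. card F = 3 \<longrightarrow>
        (\<exists>c r. (\<forall>v\<in>F. dist c v = r) \<and> (\<forall>x\<in>X. dist c x \<le> r)))"

end

theory Submission
  imports Defs
begin


lemma affine_comb:
  fixes G :: "(real^2) set" and v :: "real^2"
  assumes "finite G" "sum b G = 1"
  shows "k + 2 * ((\<Sum>g\<in>G. b g *\<^sub>R g) \<bullet> v) = (\<Sum>g\<in>G. b g * (k + 2 * (g \<bullet> v)))"
proof -
  have "(\<Sum>g\<in>G. b g * (k + 2 * (g \<bullet> v))) = (\<Sum>g\<in>G. b g) * k + 2 * (\<Sum>g\<in>G. b g * (g \<bullet> v))"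
    by (simp add: algebra_simps sum.distrib sum_distrib_left sum_distrib_right)
  also have "(\<Sum>g\<in>G. b g * (g \<bullet> v)) = (\<Sum>g\<in>G. b g *\<^sub>R g) \<bullet> v"
    by (simp add: inner_sum_left)
  finally show ?thesis using assms by simp
qed

lemma lift_id:
  fixes x s c :: "real^2"
  shows "(R^2 - (norm (x - s))^2) + ((norm (x - c))^2 - r^2) =
         (R^2 - r^2 + (norm c)^2 - (norm s)^2) + 2 * (x \<bullet> (s - c))"
  by (simp add: power2_norm_eq_inner inner_diff_left inner_diff_right inner_commute algebra_simps)

lemma lift:
  fixes G A :: "(real^2) set" and s c y :: "real^2"
  assumes fG: "finite G" and fA: "finite A" and yA: "y \<in> convex hull A"
    and bpos: "\<forall>g\<in>G. 0 \<le> b g" and bsum: "sum b G = 1" and bY: "(\<Sum>g\<in>G. b g *\<^sub>R g) = y"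
    and Gc: "\<forall>g\<in>G. dist c g = r" and Ac: "\<forall>a\<in>A. dist c a \<le> r"
    and As: "\<forall>a\<in>A. dist s a = R" and Gs: "\<forall>g\<in>G. dist s g \<le> R"
    and R0: "0 \<le> R" and r0: "0 \<le> r"
  shows "\<forall>g\<in>G. 0 < b g \<longrightarrow> dist s g = R"
proof -
  define k where "k = R^2 - r^2 + (norm c)^2 - (norm s)^2"
  define L where "L x = k + 2 * (x \<bullet> (s - c))" for x :: "real^2"
  have Lid: "L x = (R^2 - (norm (x - s))^2) + ((norm (x - c))^2 - r^2)" for x
    unfolding L_def k_def by (simp add: lift_id)
  obtain a where a0: "\<forall>x\<in>A. 0 \<le> a x" and a1: "sum a A = 1" and ay: "(\<Sum>x\<in>A. a x *\<^sub>R x) = y"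
    using yA fA by (auto simp: convex_hull_finite)
  have "L y = (\<Sum>x\<in>A. a x * L x)"
    unfolding L_def using affine_comb[OF fA a1] ay by simp
  also have "\<dots> \<le> 0"
  proof (rule sum_nonpos)
    fix x assume x: "x \<in> A"
    have "norm (x - s) = R" using As x by (metis dist_norm dist_commute)
    moreover have "norm (x - c) \<le> r" using Ac x by (metis dist_norm dist_commute)
    hence "(norm (x - c))^2 \<le> r^2" by (simp add: power_mono)
    ultimately have "L x \<le> 0" by (simp add: Lid)
    thus "a x * L x \<le> 0" using a0 x by (simp add: mult_nonneg_nonpos)
  qed
  finally have Ly: "L y \<le> 0" .
  have phi: "L g = R^2 - (norm (g - s))^2" if "g \<in> G" for g
  proof -
    have "norm (g - c) = r" using Gc that by (metis dist_norm dist_commute)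
    thus ?thesis by (simp add: Lid)
  qed
  have phinn: "0 \<le> R^2 - (norm (g - s))^2" if "g \<in> G" for g
  proof -
    have "norm (g - s) \<le> R" using Gs that by (metis dist_norm dist_commute)
    hence "(norm (g - s))^2 \<le> R^2" by (simp add: power_mono)
    thus ?thesis by simp
  qed
  have "L y = (\<Sum>g\<in>G. b g * L g)"
    unfolding L_def using affine_comb[OF fG bsum, of k "s - c"] by (simp only: bY)
  also have "\<dots> = (\<Sum>g\<in>G. b g * (R^2 - (norm (g - s))^2))"
    by (rule sum.cong) (auto simp: phi)
  finally have le0: "(\<Sum>g\<in>G. b g * (R^2 - (norm (g - s))^2)) \<le> 0" using Ly by simp
  have nn: "\<forall>g\<in>G. 0 \<le> b g * (R^2 - (norm (g - s))^2)"
  proof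
    fix g assume "g \<in> G"
    show "0 \<le> b g * (R^2 - (norm (g - s))^2)"
      by (rule mult_nonneg_nonneg) (use bpos \<open>g \<in> G\<close> phinn in auto)
  qed
  have ge0: "0 \<le> (\<Sum>g\<in>G. b g * (R^2 - (norm (g - s))^2))"
    by (rule sum_nonneg) (use nn in blast)
  have eq0: "(\<Sum>g\<in>G. b g * (R^2 - (norm (g - s))^2)) = 0"
    using le0 ge0 by linarith
  have z: "\<forall>g\<in>G. b g * (R^2 - (norm (g - s))^2) = 0"
    using sum_nonneg_eq_0_iff[OF fG, of "\<lambda>g. b g * (R^2 - (norm (g - s))^2)"] nn eq0 by blast
  show ?thesis
  proof (intro ballI impI)
    fix g assume g: "g \<in> G" "0 < b g"
    have "b g * (R^2 - (norm (g - s))^2) = 0" using z g(1) by blast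
    hence "R^2 - (norm (g - s))^2 = 0" using g(2) by simp
    hence "(norm (g - s))^2 = R^2" by simp
    hence "norm (g - s) = R" using R0 by (simp add: power2_eq_iff_nonneg)
    thus "dist s g = R" by (metis dist_norm dist_commute)
  qed
qed



lemma nexp:
  fixes t s x :: "real^2"
  shows "(norm (t - x))^2 = (norm (s - x))^2 + 2 * ((t - s) \<bullet> (s - x)) + (norm (t - s))^2"
proof -
  have "t - x = (t - s) + (s - x)" by simp
  hence "(norm (t - x))^2 = (norm ((t - s) + (s - x)))^2" by simp
  also have "\<dots> = (norm (s - x))^2 + 2 * ((t - s) \<bullet> (s - x)) + (norm (t - s))^2"
    by (simp only: power2_norm_eq_inner inner_add_left inner_add_right inner_commute[of "s - x" "t - s"])
  finally show ?thesis .
qed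

lemma wsum:
  fixes X :: "(real^2) set" and t s :: "real^2"
  assumes "finite X"
  shows "(\<Sum>x\<in>X. w x * (norm (t - x))^2) = (\<Sum>x\<in>X. w x * (norm (s - x))^2)
     + 2 * ((t - s) \<bullet> ((sum w X) *\<^sub>R s - (\<Sum>x\<in>X. w x *\<^sub>R x))) + sum w X * (norm (t - s))^2"
proof -
  have "(\<Sum>x\<in>X. w x * (norm (t - x))^2) =
        (\<Sum>x\<in>X. w x * (norm (s - x))^2 + 2 * (w x * ((t - s) \<bullet> (s - x))) + w x * (norm (t - s))^2)"
  proof (rule sum.cong)
    fix x assume "x \<in> X"
    show "w x * (norm (t - x))^2 = w x * (norm (s - x))^2 + 2 * (w x * ((t - s) \<bullet> (s - x))) + w x * (norm (t - s))^2"
      unfolding nexp[of t x s] by (simp add: ring_distribs)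
  qed simp
  also have "\<dots> = (\<Sum>x\<in>X. w x * (norm (s - x))^2) + 2 * (\<Sum>x\<in>X. w x * ((t - s) \<bullet> (s - x)))
       + sum w X * (norm (t - s))^2"
    by (simp add: sum.distrib sum_distrib_left sum_distrib_right)
  also have "(\<Sum>x\<in>X. w x * ((t - s) \<bullet> (s - x))) = (t - s) \<bullet> ((sum w X) *\<^sub>R s - (\<Sum>x\<in>X. w x *\<^sub>R x))"
    by (simp add: inner_sum_right inner_diff_right sum_subtractf scaleR_sum_left sum_distrib_left sum.distrib algebra_simps)
  finally show ?thesis .
qed

lemma usum:
  fixes X :: "(real^2) set" and t s :: "real^2"
  assumes "finite X"
  shows "(\<Sum>x\<in>X. (norm (t - x))^2) = (\<Sum>x\<in>X. (norm (s - x))^2)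
     + 2 * ((t - s) \<bullet> (real (card X) *\<^sub>R s - (\<Sum>x\<in>X. x))) + real (card X) * (norm (t - s))^2"
  using wsum[OF assms, of "\<lambda>_. 1" t s] by simp

lemma suff:
  fixes X F :: "(real^2) set" and s y :: "real^2"
  assumes fX: "finite X" and FX: "F \<subseteq> X" and Fne: "F \<noteq> {}" and yF: "y \<in> convex hull F"
    and sy: "s = homT X y" and far: "\<forall>v\<in>F. \<forall>x\<in>X. dist s x \<le> dist s v"
  shows "min_power_centre X s"
  unfolding min_power_centre_def
proof
  fix t
  have fF: "finite F" using fX FX finite_subset by blast
  obtain l where l0: "\<forall>v\<in>F. 0 \<le> l v" and l1: "sum l F = 1" and ly: "(\<Sum>v\<in>F. l v *\<^sub>R v) = y"
    using yF fF by (auto simp: convex_hull_finite)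
  define n where "n = real (card X)"
  define S where "S = (\<Sum>x\<in>X. x)"
  have sS: "(n + 1) *\<^sub>R s = y + S"
    using sy unfolding homT_def n_def S_def by (simp add: add_pos_nonneg)
  obtain v0 where v0: "v0 \<in> F" using Fne by blast
  have eqd: "norm (s - v) = norm (s - v0)" if "v \<in> F" for v
    using far that v0 FX by (metis antisym dist_norm subsetD)
  have Ms: "Max ((\<lambda>x. (norm (s - x))^2) ` X) = (norm (s - v0))^2"
  proof (rule Max_eqI)
    show "finite ((\<lambda>x. (norm (s - x))^2) ` X)" using fX by simp
    show "(norm (s - v0))^2 \<in> (\<lambda>x. (norm (s - x))^2) ` X" using v0 FX by blast
    fix z assume "z \<in> (\<lambda>x. (norm (s - x))^2) ` X"
    then obtain x where x: "x \<in> X" "z = (norm (s - x))^2" by blast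
    have "norm (s - x) \<le> norm (s - v0)" using far v0 x by (metis dist_norm)
    thus "z \<le> (norm (s - v0))^2" using x by (simp add: power_mono)
  qed
  have Ls: "(\<Sum>v\<in>F. l v * (norm (s - v))^2) = (norm (s - v0))^2"
  proof -
    have "(\<Sum>v\<in>F. l v * (norm (s - v))^2) = (\<Sum>v\<in>F. l v * (norm (s - v0))^2)"
      by (rule sum.cong) (simp_all add: eqd)
    also have "\<dots> = (norm (s - v0))^2" using l1 by (simp add: sum_distrib_right[symmetric])
    finally show ?thesis .
  qed
  have Lt: "(\<Sum>v\<in>F. l v * (norm (t - v))^2) \<le> Max ((\<lambda>x. (norm (t - x))^2) ` X)"
  proof -
    have "(\<Sum>v\<in>F. l v * (norm (t - v))^2) \<le> (\<Sum>v\<in>F. l v * Max ((\<lambda>x. (norm (t - x))^2) ` X))"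
    proof (rule sum_mono)
      fix v assume v: "v \<in> F"
      have "(norm (t - v))^2 \<le> Max ((\<lambda>x. (norm (t - x))^2) ` X)"
        using fX v FX by (intro Max_ge) auto
      thus "l v * (norm (t - v))^2 \<le> l v * Max ((\<lambda>x. (norm (t - x))^2) ` X)"
        using l0 v by (simp add: mult_left_mono)
    qed
    also have "\<dots> = Max ((\<lambda>x. (norm (t - x))^2) ` X)" using l1 by (simp add: sum_distrib_right[symmetric])
    finally show ?thesis .
  qed
  have e1: "(\<Sum>x\<in>X. (norm (t - x))^2) = (\<Sum>x\<in>X. (norm (s - x))^2)
     + 2 * ((t - s) \<bullet> (n *\<^sub>R s - S)) + n * (norm (t - s))^2"
    using usum[OF fX, of t s] unfolding n_def S_def .
  have e2: "(\<Sum>v\<in>F. l v * (norm (t - v))^2) = (\<Sum>v\<in>F. l v * (norm (s - v))^2)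
     + 2 * ((t - s) \<bullet> (s - y)) + (norm (t - s))^2"
    using wsum[OF fF, of l t s] l1 ly by simp
  have z: "(n *\<^sub>R s - S) + (s - y) = 0"
  proof -
    have "(n *\<^sub>R s - S) + (s - y) = (n + 1) *\<^sub>R s - (y + S)" by (simp add: algebra_simps)
    thus ?thesis using sS by simp
  qed
  have "2 * ((t - s) \<bullet> (n *\<^sub>R s - S)) + 2 * ((t - s) \<bullet> (s - y)) = 2 * ((t - s) \<bullet> ((n *\<^sub>R s - S) + (s - y)))"
    by (simp add: inner_add_right)
  hence z2: "2 * ((t - s) \<bullet> (n *\<^sub>R s - S)) + 2 * ((t - s) \<bullet> (s - y)) = 0" using z by simp
  have "power_fn X s = (\<Sum>x\<in>X. (norm (s - x))^2) + (\<Sum>v\<in>F. l v * (norm (s - v))^2)"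
    unfolding power_fn_def Ms Ls ..
  also have "\<dots> \<le> (\<Sum>x\<in>X. (norm (t - x))^2) + (\<Sum>v\<in>F. l v * (norm (t - v))^2)"
  proof -
    have "0 \<le> n * (norm (t - s))^2" unfolding n_def by simp
    moreover have "0 \<le> (norm (t - s))^2" by simp
    ultimately show ?thesis using e1 e2 z2 unfolding n_def by linarith
  qed
  also have "\<dots> \<le> power_fn X t"
    unfolding power_fn_def using Lt by simp
  finally show "power_fn X s \<le> power_fn X t" .
qed



lemma nec:
  fixes X :: "(real^2) set" and s :: "real^2"
  assumes fX: "finite X" and Xne: "X \<noteq> {}" and opt: "min_power_centre X s"
  defines "M \<equiv> Max ((\<lambda>x. (norm (s - x))^2) ` X)"
  shows "(real (card X) + 1) *\<^sub>R s - (\<Sum>x\<in>X. x) \<in> convex hull {a\<in>X. (norm (s - a))^2 = M}"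
proof (rule ccontr)
  define A where "A = {a\<in>X. (norm (s - a))^2 = M}"
  define n where "n = real (card X)"
  define S where "S = (\<Sum>x\<in>X. x)"
  define w where "w = (n + 1) *\<^sub>R s - S"
  assume "\<not> ?thesis"
  hence wA: "w \<notin> convex hull A" unfolding w_def A_def n_def S_def .
  have fA: "finite A" using fX unfolding A_def by simp
  have Mge: "(norm (s - x))^2 \<le> M" if "x \<in> X" for x
    unfolding M_def using fX that by (intro Max_ge) auto
  obtain u b where ub: "u \<bullet> w < b" "\<forall>z\<in>convex hull A. b < u \<bullet> z"
    using separating_hyperplane_closed_point[OF convex_convex_hull _ wA]
      compact_imp_closed[OF compact_convex_hull[OF finite_imp_compact[OF fA]]] by blast
  have neg: "u \<bullet> (w - a) < 0" if "a \<in> A" for a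
  proof -
    have "b < u \<bullet> a" using ub(2) that hull_subset[of A convex] by blast
    thus ?thesis using ub(1) by (simp add: inner_diff_right)
  qed
  define g where "g x e = (norm (s - x))^2 + 2 * e * (u \<bullet> (w - x)) + (n + 1) * e^2 * (norm u)^2" for x e
  have ev: "\<forall>\<^sub>F e in at_right 0. g x e < M" if x: "x \<in> X" for x
  proof (cases "(norm (s - x))^2 < M")
    case True
    have "((\<lambda>e. g x e) \<longlongrightarrow> g x 0) (at_right 0)"
      unfolding g_def by (intro tendsto_intros)
    moreover have "g x 0 < M" using True by (simp add: g_def)
    ultimately show ?thesis by (rule order_tendstoD(2))
  next
    case False
    hence xA: "x \<in> A" using Mge[OF x] x unfolding A_def by simp
    define h where "h e = 2 * (u \<bullet> (w - x)) + (n + 1) * e * (norm u)^2" for e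
    have "((\<lambda>e. h e) \<longlongrightarrow> h 0) (at_right 0)"
      unfolding h_def by (intro tendsto_intros)
    moreover have "h 0 < 0" using neg[OF xA] by (simp add: h_def)
    ultimately have "\<forall>\<^sub>F e in at_right 0. h e < 0" by (rule order_tendstoD(2))
    moreover have "\<forall>\<^sub>F e in at_right (0::real). 0 < e" by (rule eventually_at_right_less)
    ultimately show ?thesis
    proof eventually_elim
      case (elim e)
      have "g x e = M + e * h e"
        using False Mge[OF x] unfolding g_def h_def by (simp add: algebra_simps power2_eq_square)
      moreover have "e * h e < 0" using elim by (simp add: mult_pos_neg)
      ultimately show ?case by simp
    qed
  qed
  have "\<forall>\<^sub>F e in at_right (0::real). 0 < e \<and> (\<forall>x\<in>X. g x e < M)"
  proof (rule eventually_conj)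
    show "\<forall>\<^sub>F e in at_right (0::real). 0 < e" by (rule eventually_at_right_less)
    show "\<forall>\<^sub>F e in at_right (0::real). \<forall>x\<in>X. g x e < M"
      by (rule eventually_ball_finite[OF fX]) (use ev in blast)
  qed
  then obtain e where e: "0 < e" "\<forall>x\<in>X. g x e < M"
    using eventually_happens[of _ "at_right (0::real)"] by auto
  define t where "t = s + e *\<^sub>R u"
  have St: "(\<Sum>x\<in>X. (norm (t - x))^2) = (\<Sum>x\<in>X. (norm (s - x))^2) + 2 * e * (u \<bullet> (n *\<^sub>R s - S)) + n * e^2 * (norm u)^2"
    using usum[OF fX, of t s] unfolding t_def n_def S_def by (simp add: power_mult_distrib)
  have tx: "(norm (t - x))^2 + (\<Sum>x\<in>X. (norm (t - x))^2) = g x e + (\<Sum>x\<in>X. (norm (s - x))^2)" for x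
  proof -
    have "(norm (t - x))^2 = (norm (s - x))^2 + 2 * e * (u \<bullet> (s - x)) + e^2 * (norm u)^2"
      using nexp[of t x s] unfolding t_def by (simp add: power_mult_distrib)
    have "u \<bullet> (w - x) = u \<bullet> (s - x) + u \<bullet> (n *\<^sub>R s - S)"
      unfolding w_def by (simp add: inner_diff_right inner_add_right algebra_simps)
    hence eq2: "2 * e * (u \<bullet> (w - x)) = 2 * e * (u \<bullet> (s - x)) + 2 * e * (u \<bullet> (n *\<^sub>R s - S))"
      by (simp add: ring_distribs)
    have eq3: "(n + 1) * e^2 * (norm u)^2 = e^2 * (norm u)^2 + n * e^2 * (norm u)^2"
      by (simp add: algebra_simps)
    show ?thesis using \<open>(norm (t - x))^2 = _\<close> eq2 eq3 St unfolding g_def by linarith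
  qed
  have "Max ((\<lambda>x. (norm (t - x))^2) ` X) < M + (\<Sum>x\<in>X. (norm (s - x))^2) - (\<Sum>x\<in>X. (norm (t - x))^2)"
  proof -
    have "\<forall>x\<in>X. (norm (t - x))^2 < M + (\<Sum>x\<in>X. (norm (s - x))^2) - (\<Sum>x\<in>X. (norm (t - x))^2)"
    proof
      fix x assume "x \<in> X"
      thus "(norm (t - x))^2 < M + (\<Sum>x\<in>X. (norm (s - x))^2) - (\<Sum>x\<in>X. (norm (t - x))^2)"
        using e(2) tx[of x] by fastforce
    qed
    thus ?thesis using fX Xne by simp
  qed
  hence "power_fn X t < power_fn X s"
    unfolding power_fn_def M_def by simp
  with opt show False unfolding min_power_centre_def by (meson not_le)
qed



lemma homT_rel:
  fixes X C :: "(real^2) set" and y :: "real^2"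
  assumes "y \<in> rel_interior C"
  shows "homT X y \<in> rel_interior (homT X ` C)"
proof -
  define c where "c = 1 / (real (card X) + 1)"
  define S where "S = (\<Sum>x\<in>X. x)"
  have c0: "c \<noteq> 0" unfolding c_def by (simp add: add_pos_nonneg)
  have h: "homT X = (\<lambda>z. c *\<^sub>R S + z) \<circ> (\<lambda>z. c *\<^sub>R z)"
    unfolding homT_def c_def S_def by (auto simp: scaleR_add_right)
  have lin: "bounded_linear (\<lambda>z::real^2. c *\<^sub>R z)" by (rule bounded_linear_scaleR_right)
  have inj: "inj (\<lambda>z::real^2. c *\<^sub>R z)" using c0 by (simp add: inj_on_def)
  have "rel_interior (homT X ` C) = (\<lambda>z. c *\<^sub>R S + z) ` ((\<lambda>z. c *\<^sub>R z) ` rel_interior C)"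
    unfolding h image_comp[symmetric] rel_interior_translation rel_interior_injective_linear_image[OF lin inj] ..
  thus ?thesis using assms h by auto
qed

lemma K_card:
  fixes F :: "(real^2) set"
  assumes "\<not> affine_dependent F"
  shows "card F \<le> 3"
proof -
  have "aff_dim F = int (card F) - 1" using assms by (simp add: aff_dim_affine_independent)
  moreover have "aff_dim F \<le> int DIM(real^2)" by (rule aff_dim_le_DIM)
  ultimately show ?thesis by simp
qed

lemma not_ext_beyond:
  fixes p q x :: "real^2"
  assumes "p \<noteq> q" "x = (1 - v) *\<^sub>R p + v *\<^sub>R q" "1 < v" "x \<in> S" "p \<in> S"
  shows "\<not> q extreme_point_of S"
proof
  assume e: "q extreme_point_of S"
  have xp: "x \<noteq> p"
  proof
    assume "x = p"
    hence "v *\<^sub>R (q - p) = 0" using assms(2) by (simp add: algebra_simps)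
    thus False using assms(1,3) by simp
  qed
  have v0: "v \<noteq> 0" using assms(3) by simp
  have "x + (v - 1) *\<^sub>R p = v *\<^sub>R q" using assms(2) by (simp add: algebra_simps)
  hence "(1/v) *\<^sub>R (x + (v - 1) *\<^sub>R p) = q" using v0 by simp
  hence "q = (1/v) *\<^sub>R x + ((v - 1) / v) *\<^sub>R p" by (simp add: scaleR_add_right)
  moreover have "(v - 1) / v = 1 - 1/v" using v0 by (simp add: field_simps)
  ultimately have "q = (1 - 1/v) *\<^sub>R p + (1/v) *\<^sub>R x" by simp
  moreover have "0 < 1/v" "1/v < 1" using assms(3) by auto
  ultimately have "q \<in> open_segment p x" using xp unfolding in_segment by blast
  thus False using e assms(4,5) unfolding extreme_point_of_def by blast
qed



lemma seg_circle:
  fixes X :: "(real^2) set" and p q x :: "real^2"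
  assumes int: "interior (convex hull X) = {}" and ep: "p extreme_point_of (convex hull X)"
    and eq: "q extreme_point_of (convex hull X)" and pq: "p \<noteq> q" and xX: "x \<in> X"
  shows "dist ((1/2) *\<^sub>R (p + q)) x \<le> dist ((1/2) *\<^sub>R (p + q)) p"
proof -
  obtain a b where a0: "a \<noteq> 0" and sub: "convex hull X \<subseteq> {z. a \<bullet> z = b}"
    by (rule empty_interior_subset_hyperplane[OF convex_convex_hull int])
  have pX: "p \<in> convex hull X" and qX: "q \<in> convex hull X"
    using ep eq unfolding extreme_point_of_def by (simp_all only:)
  have xC: "x \<in> convex hull X" using xX by (rule hull_inc)
  have sub2: "affine hull {p, q} \<subseteq> {z. a \<bullet> z = b}"
  proof -
    have "{p, q} \<subseteq> {z. a \<bullet> z = b}" using pX qX sub by blast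
    thus ?thesis by (rule hull_minimal) (rule affine_hyperplane)
  qed
  have "affine hull {p, q} = {z. a \<bullet> z = b}"
  proof (rule affine_dim_equal)
    show "affine (affine hull {p, q})" by simp
    show "affine {z. a \<bullet> z = b}" by (rule affine_hyperplane)
    show "affine hull {p, q} \<noteq> {}" by simp
    show "affine hull {p, q} \<subseteq> {z. a \<bullet> z = b}" by (rule sub2)
    show "aff_dim (affine hull {p, q}) = aff_dim {z. a \<bullet> z = b}"
    proof -
      have "aff_dim {z. a \<bullet> z = b} = int (DIM(real^2) - 1)" by (rule aff_dim_hyperplane[OF a0])
      hence "aff_dim {z. a \<bullet> z = b} = 1" by simp
      moreover have "aff_dim (affine hull {p, q}) = 1" using pq by simp
      ultimately show ?thesis by simp
    qed
  qed
  hence "x \<in> affine hull {p, q}" using xC sub by blast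
  then obtain u v where uv: "u + v = 1" "x = u *\<^sub>R p + v *\<^sub>R q"
    unfolding affine_hull_2 by blast
  have v1: "v \<le> 1"
  proof (rule ccontr)
    assume "\<not> v \<le> 1"
    hence "1 < v" by simp
    moreover have "x = (1 - v) *\<^sub>R p + v *\<^sub>R q"
    proof -
      have "u = 1 - v" using uv(1) by linarith
      thus ?thesis using uv(2) by simp
    qed
    ultimately have "\<not> q extreme_point_of (convex hull X)"
      using not_ext_beyond[OF pq _ _ xC pX] by blast
    thus False using eq by blast
  qed
  have v0: "0 \<le> v"
  proof (rule ccontr)
    assume "\<not> 0 \<le> v"
    hence "1 < u" using uv by linarith
    moreover have "x = (1 - u) *\<^sub>R q + u *\<^sub>R p"
    proof -
      have "v = 1 - u" using uv(1) by linarith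
      thus ?thesis using uv(2) by (simp add: add.commute)
    qed
    ultimately have "\<not> p extreme_point_of (convex hull X)"
      using not_ext_beyond[OF pq[symmetric] _ _ xC qX] by blast
    thus False using ep by blast
  qed
  have uu: "u = 1 - v" using uv(1) by linarith
  have dx: "(1/2) *\<^sub>R (p + q) - x = (1/2 - v) *\<^sub>R (q - p)"
    using uv(2) uu by (simp add: vec_eq_iff algebra_simps)
  have dp: "(1/2) *\<^sub>R (p + q) - p = (1/2) *\<^sub>R (q - p)"
    by (simp add: vec_eq_iff algebra_simps)
  have "\<bar>1/2 - v\<bar> \<le> 1/2" using v0 v1 by (auto simp: abs_if)
  hence "\<bar>1/2 - v\<bar> * norm (q - p) \<le> (1/2) * norm (q - p)" by (rule mult_right_mono) simp
  thus ?thesis unfolding dist_norm dx dp by simp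
qed


lemma K_all0:
  assumes "fp_delaunay_triangulation X K"
  shows "\<forall>F\<in>K. F \<noteq> {} \<and> F \<subseteq> {x. x extreme_point_of (convex hull X)} \<and>
              \<not> affine_dependent F \<and> (\<forall>G. G \<noteq> {} \<and> G \<subseteq> F \<longrightarrow> G \<in> K)"
  using assms unfolding fp_delaunay_triangulation_def by (elim conjE) assumption

lemma K_all:
  assumes "fp_delaunay_triangulation X K" "F \<in> K"
  shows "F \<noteq> {} \<and> F \<subseteq> {x. x extreme_point_of (convex hull X)} \<and>
              \<not> affine_dependent F \<and> (\<forall>G. G \<noteq> {} \<and> G \<subseteq> F \<longrightarrow> G \<in> K)"
  using K_all0[OF assms(1)] assms(2) by (rule bspec)

lemma K_props:
  assumes "fp_delaunay_triangulation X K" "F \<in> K"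
  shows "F \<noteq> {}" "F \<subseteq> X" "\<not> affine_dependent F" "\<And>G. G \<noteq> {} \<Longrightarrow> G \<subseteq> F \<Longrightarrow> G \<in> K"
    "\<And>v. v \<in> F \<Longrightarrow> v extreme_point_of (convex hull X)"
proof -
  note h = K_all[OF assms]
  show "F \<noteq> {}" using h by (rule conjunct1)
  show "\<not> affine_dependent F" using h by blast
  show "\<And>G. G \<noteq> {} \<Longrightarrow> G \<subseteq> F \<Longrightarrow> G \<in> K" using h by blast
  show ext: "\<And>v. v \<in> F \<Longrightarrow> v extreme_point_of (convex hull X)" using h by blast
  show "F \<subseteq> X" using ext extreme_point_of_convex_hull by blast
qed

lemma K_tri:
  assumes "fp_delaunay_triangulation X K" "F \<in> K" "card F = 3"
  shows "\<exists>c r. (\<forall>v\<in>F. dist c v = r) \<and> (\<forall>x\<in>X. dist c x \<le> r)"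
proof -
  have "\<forall>F\<in>K. card F = 3 \<longrightarrow>
        (\<exists>c r. (\<forall>v\<in>F. dist c v = r) \<and> (\<forall>x\<in>X. dist c x \<le> r))"
    using assms(1) unfolding fp_delaunay_triangulation_def by (elim conjE) assumption
  thus ?thesis using assms(2,3) by blast
qed

lemma K_cover:
  assumes "fp_delaunay_triangulation X K"
  shows "\<Union>((\<lambda>F. convex hull F) ` K) = convex hull X"
  using assms unfolding fp_delaunay_triangulation_def by (elim conjE) assumption

lemma K_finite:
  assumes "finite X" "fp_delaunay_triangulation X K"
  shows "finite K"
proof -
  have "K \<subseteq> Pow X" using K_props(2)[OF assms(2)] by blast
  thus ?thesis using assms(1) finite_subset by blast
qed

lemma tri_cover:
  fixes X :: "(real^2) set" and K :: "(real^2) set set" and z :: "real^2"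
  assumes fX: "finite X" and D: "fp_delaunay_triangulation X K"
    and int: "interior (convex hull X) \<noteq> {}" and z: "z \<in> convex hull X"
  shows "\<exists>G\<in>K. card G = 3 \<and> z \<in> convex hull G"
proof -
  have fK: "finite K" by (rule K_finite[OF fX D])
  define T where "T = \<Union>((\<lambda>F. convex hull F) ` {F\<in>K. card F = 3})"
  define E where "E = \<Union>((\<lambda>F. convex hull F) ` {F\<in>K. card F \<noteq> 3})"
  have cov: "convex hull X = T \<union> E" unfolding T_def E_def K_cover[OF D, symmetric] by blast
  have negE: "negligible E" unfolding E_def
  proof (rule negligible_Union)
    show "finite ((\<lambda>F. convex hull F) ` {F\<in>K. card F \<noteq> 3})" using fK by simp
    fix C assume "C \<in> (\<lambda>F. convex hull F) ` {F\<in>K. card F \<noteq> 3}"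
    then obtain F where F: "F \<in> K" "card F \<noteq> 3" "C = convex hull F" by blast
    have ind: "\<not> affine_dependent F" using K_props(3)[OF D F(1)] .
    have "card F \<le> 3" by (rule K_card[OF ind])
    hence c2: "card F \<le> DIM(real^2)" using F(2) by simp
    have "interior (convex hull F) = {}"
      by (rule empty_interior_convex_hull[OF aff_independent_finite[OF ind] c2])
    thus "negligible C" using F(3) by (simp add: negligible_convex_interior)
  qed
  have clT: "closed T" unfolding T_def
  proof (rule closed_Union)
    show "finite ((\<lambda>F. convex hull F) ` {F\<in>K. card F = 3})" using fK by simp
    show "\<forall>C\<in>(\<lambda>F. convex hull F) ` {F\<in>K. card F = 3}. closed C"
    proof
      fix C assume "C \<in> (\<lambda>F. convex hull F) ` {F\<in>K. card F = 3}"
      then obtain F where F: "F \<in> K" "C = convex hull F" by blast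
      have "finite F" using K_props(3)[OF D F(1)] aff_independent_finite by blast
      thus "closed C" using F(2) by (simp add: compact_imp_closed finite_imp_compact compact_convex_hull)
    qed
  qed
  have iT: "interior (convex hull X) \<subseteq> T"
  proof (rule ccontr)
    assume "\<not> ?thesis"
    hence ne: "interior (convex hull X) - T \<noteq> {}" by blast
    have op: "open (interior (convex hull X) - T)" using clT by (simp add: open_Diff)
    have "interior (convex hull X) - T \<subseteq> E" using cov interior_subset by blast
    hence "negligible (interior (convex hull X) - T)" using negE negligible_subset by blast
    thus False using open_not_negligible[OF op ne] by blast
  qed
  have clX: "closed (convex hull X)"
    using fX by (simp add: compact_imp_closed finite_imp_compact compact_convex_hull)
  have "convex hull X = closure (interior (convex hull X))"
    using convex_closure_interior[OF convex_convex_hull int] clX by (simp add: closure_closed)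
  also have "\<dots> \<subseteq> T" using iT clT by (metis closure_minimal)
  finally have "z \<in> T" using z by blast
  thus ?thesis unfolding T_def by blast
qed



theorem theorem1:
  fixes X :: "(real^2) set" and K :: "(real^2) set set" and s :: "real^2"
  assumes "finite X" and "X \<noteq> {}" and "fp_delaunay_triangulation X K"
  shows "min_power_centre X s \<longleftrightarrow>
           (\<exists>F\<in>K. s \<in> rel_interior (homT X ` (convex hull F)) \<and>
                   s \<in> (\<Inter>v\<in>F. far_voronoi X v))"
proof
  assume opt: "min_power_centre X s"
  note fX = assms(1) and Xne = assms(2) and D = assms(3)
  define M where "M = Max ((\<lambda>x. (norm (s - x))^2) ` X)"
  define A where "A = {a\<in>X. (norm (s - a))^2 = M}"
  define n where "n = real (card X)"
  define S where "S = (\<Sum>x\<in>X. x)"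
  define y where "y = (n + 1) *\<^sub>R s - S"
  have yA: "y \<in> convex hull A"
    using nec[OF fX Xne opt] unfolding y_def n_def S_def A_def M_def .
  have sy: "s = homT X y"
  proof -
    have "n + 1 \<noteq> 0" unfolding n_def by (simp add: add_pos_nonneg)
    thus ?thesis unfolding homT_def y_def n_def[symmetric] S_def[symmetric] by simp
  qed
  define R where "R = sqrt M"
  have Mge: "(norm (s - x))^2 \<le> M" if "x \<in> X" for x
    unfolding M_def using fX that by (intro Max_ge) auto
  have Xs: "dist s x \<le> R" if "x \<in> X" for x
    using Mge[OF that] unfolding R_def dist_norm by (simp add: real_le_rsqrt)
  have As: "dist s a = R" if "a \<in> A" for a
    using that unfolding A_def R_def dist_norm by (auto simp: real_sqrt_unique)
  have AX: "A \<subseteq> X" unfolding A_def by blast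
  have R0: "0 \<le> R"
  proof -
    obtain x0 where "x0 \<in> X" using Xne by blast
    hence "0 \<le> M" using Mge[of x0] by (meson order_trans zero_le_power2)
    thus ?thesis unfolding R_def by simp
  qed
  have yX: "y \<in> convex hull X" using yA hull_mono[OF AX] by blast
  have lifted: "\<exists>F\<in>K. y \<in> rel_interior (convex hull F) \<and> (\<forall>v\<in>F. dist s v = R)"
    if G: "G \<in> K" "y \<in> convex hull G" and cr: "\<forall>g\<in>G. dist c g = r" "\<forall>a\<in>A. dist c a \<le> r" for G c r
  proof -
    have indG: "\<not> affine_dependent G" by (rule K_props(3)[OF D G(1)])
    have fG: "finite G" by (rule aff_independent_finite[OF indG])
    have GX: "G \<subseteq> X" by (rule K_props(2)[OF D G(1)])
    have Gne: "G \<noteq> {}" by (rule K_props(1)[OF D G(1)])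
    then obtain g0 where g0: "g0 \<in> G" by blast
    have r0: "0 \<le> r" using cr(1) g0 by force
    obtain b where b0: "\<forall>g\<in>G. 0 \<le> b g" and b1: "sum b G = 1" and bY: "(\<Sum>g\<in>G. b g *\<^sub>R g) = y"
      using G(2) fG by (auto simp: convex_hull_finite)
    have fA: "finite A" using AX fX finite_subset by blast
    have key: "\<forall>g\<in>G. 0 < b g \<longrightarrow> dist s g = R"
      by (rule lift[OF fG fA yA b0 b1 bY cr(1) cr(2)]) (use As Xs GX R0 r0 in auto)
    define F where "F = {g\<in>G. 0 < b g}"
    have FG: "F \<subseteq> G" unfolding F_def by blast
    have z: "\<forall>g\<in>G - F. b g = 0" using b0 unfolding F_def by force
    have sF: "sum b F = 1"
      using sum.mono_neutral_left[OF fG FG z] b1 by simp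
    have yF: "(\<Sum>g\<in>F. b g *\<^sub>R g) = y"
      using sum.mono_neutral_left[OF fG FG, of "\<lambda>g. b g *\<^sub>R g"] z bY by simp
    have Fne: "F \<noteq> {}" using sF by auto
    have FK: "F \<in> K" by (rule K_props(4)[OF D G(1) Fne FG])
    have indF: "\<not> affine_dependent F" by (rule K_props(3)[OF D FK])
    have "y \<in> rel_interior (convex hull F)"
      unfolding rel_interior_convex_hull_explicit[OF indF] using sF yF unfolding F_def by blast
    moreover have "\<forall>v\<in>F. dist s v = R" using key unfolding F_def by blast
    ultimately show ?thesis using FK by blast
  qed
  have claim: "\<exists>F\<in>K. y \<in> rel_interior (convex hull F) \<and> (\<forall>v\<in>F. dist s v = R)"
  proof (cases "interior (convex hull X) = {}")
    case False
    obtain G where G: "G \<in> K" "card G = 3" "y \<in> convex hull G"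
      using tri_cover[OF fX D False yX] by blast
    obtain c r where cr: "\<forall>v\<in>G. dist c v = r" "\<forall>x\<in>X. dist c x \<le> r"
      using K_tri[OF D G(1,2)] by blast
    show ?thesis by (rule lifted[OF G(1) G(3) cr(1)]) (use cr(2) AX in blast)
  next
    case True
    obtain G where G: "G \<in> K" "y \<in> convex hull G"
      using yX K_cover[OF D] by blast
    have indG: "\<not> affine_dependent G" by (rule K_props(3)[OF D G(1)])
    have fG: "finite G" by (rule aff_independent_finite[OF indG])
    have Gne: "G \<noteq> {}" by (rule K_props(1)[OF D G(1)])
    have c3: "card G \<le> 3" by (rule K_card[OF indG])
    have c0: "card G \<noteq> 0" using fG Gne by simp
    consider "card G = 1" | "card G = 2" | "card G = 3" using c3 c0 by linarith
    thus ?thesis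
    proof cases
      case 1
      then obtain p where p: "G = {p}" by (rule card_1_singletonE)
      have yp: "y = p" using G(2) p by simp
      have ep: "p extreme_point_of (convex hull X)" using K_props(5)[OF D G(1)] p by blast
      have "p extreme_point_of (convex hull A)"
        using ep yA yp hull_mono[OF AX] unfolding extreme_point_of_def by blast
      hence "p \<in> A" by (rule extreme_point_of_convex_hull)
      hence "dist s p = R" by (rule As)
      moreover have "y \<in> rel_interior (convex hull {p})" using yp by simp
      ultimately show ?thesis using G(1) p by (intro bexI[of _ "{p}"]) auto
    next
      case 2
      then obtain p q where pq: "G = {p, q}" "p \<noteq> q" by (auto simp: card_2_iff)
      have ep: "p extreme_point_of (convex hull X)" and eq: "q extreme_point_of (convex hull X)"
        using K_props(5)[OF D G(1)] pq by auto
      define c where "c = (1/2) *\<^sub>R (p + q)"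
      have cp: "dist c q = dist c p"
      proof -
        have "c - q = - (c - p)" unfolding c_def by (simp add: vec_eq_iff algebra_simps)
        thus ?thesis unfolding dist_norm by (metis norm_minus_cancel)
      qed
      have "\<forall>x\<in>X. dist c x \<le> dist c p"
        using seg_circle[OF True ep eq pq(2)] unfolding c_def by blast
      hence "\<forall>a\<in>A. dist c a \<le> dist c p" using AX by blast
      moreover have "\<forall>g\<in>G. dist c g = dist c p" using pq cp by auto
      ultimately show ?thesis using lifted[OF G(1) G(2)] by blast
    next
      case 3
      obtain c r where cr: "\<forall>v\<in>G. dist c v = r" "\<forall>x\<in>X. dist c x \<le> r"
        using K_tri[OF D G(1) 3] by blast
      show ?thesis by (rule lifted[OF G(1) G(2) cr(1)]) (use cr(2) AX in blast)
    qed
  qed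
  then obtain F where F: "F \<in> K" "y \<in> rel_interior (convex hull F)" "\<forall>v\<in>F. dist s v = R"
    by blast
  have "s \<in> rel_interior (homT X ` (convex hull F))"
    using homT_rel[OF F(2), of X] sy by simp
  moreover have "s \<in> (\<Inter>v\<in>F. far_voronoi X v)"
    unfolding far_voronoi_def using F(3) Xs by auto
  ultimately show "\<exists>F\<in>K. s \<in> rel_interior (homT X ` (convex hull F)) \<and>
                   s \<in> (\<Inter>v\<in>F. far_voronoi X v)" using F(1) by blast
next
  assume "\<exists>F\<in>K. s \<in> rel_interior (homT X ` (convex hull F)) \<and>
                   s \<in> (\<Inter>v\<in>F. far_voronoi X v)"
  then obtain F where F: "F \<in> K" "s \<in> rel_interior (homT X ` (convex hull F))"
    "s \<in> (\<Inter>v\<in>F. far_voronoi X v)" by blast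
  obtain y where y: "y \<in> convex hull F" "s = homT X y"
    using F(2) rel_interior_subset by blast
  show "min_power_centre X s"
  proof (rule suff[OF assms(1) K_props(2)[OF assms(3) F(1)] K_props(1)[OF assms(3) F(1)] y(1) y(2)])
    show "\<forall>v\<in>F. \<forall>x\<in>X. dist s x \<le> dist s v"
      using F(3) unfolding far_voronoi_def by blast
  qed
qed


end
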